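(* Let $j_1,\dots,j_6$ be non-negative half-integers (elements of $\tfrac12\mathbb Z_{\ge0}$) such that $j_1=j_5+j_6\ge 3$, $j_2=j_3$, and such that each of the four triples $$(h,j_2,j_3),\ (h,j_5,j_6),\ (j_4,j_2,j_6),\ (j_4,j_5,j_3)$$ satisfies the triangle condition both for $h=j_1$ and for $h=j_1-1$. If $\left\{\begin{matrix} j_1-1 & j_2 & j_3\\ j_4 & j_5 & j_6\end{matrix}\right\}=0$, then $\left\{\begin{matrix} j_1-2 & j_2 & j_3\\ j_4 & j_5 & j_6\end{matrix}\right\}\ne0$ and $\left\{\begin{matrix} j_1-3 & j_2 & j_3\\ j_4 & j_5 & j_6\end{matrix}\right\}\ne0$. In particular the four triples above satisfy the triangle condition also for $h=j_1-2$ and $h=j_1-3$.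
   Context: Three half-integers $j_1,j_2,j_3$ satisfy the triangle condition if $j_1+j_2+j_3\in\mathbb Z$ and $|j_1-j_2|\le j_3\le j_1+j_2$ (in particular all are non-negative). $\left\{\begin{matrix} j_1 & j_2 & j_3\\ j_4 & j_5 & j_6\end{matrix}\right\}$ denotes the Racah–Wigner $6j$-symbol of angular momentum theory (as in Varshalovich–Moskalev–Khersonskii, Quantum Theory of Angular Momentum, Ch. 9); it is a real number, defined to be $0$ unless all four triples $(j_1,j_2,j_3),(j_1,j_5,j_6),(j_4,j_2,j_6),(j_4,j_5,j_3)$ satisfy the triangle condition. *)

theory Defs
  imports Complex_Main
begin

definition halfint :: "real \<Rightarrow> bool" where
  "halfint x \<longleftrightarrow> x \<ge> 0 \<and> 2 * x \<in> \<int>"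

definition triangle :: "real \<Rightarrow> real \<Rightarrow> real \<Rightarrow> bool" where
  "triangle a b c \<longleftrightarrow> a + b + c \<in> \<int> \<and> \<bar>a - b\<bar> \<le> c \<and> c \<le> a + b"

definition tri_coeff :: "real \<Rightarrow> real \<Rightarrow> real \<Rightarrow> real" where
  "tri_coeff a b c = sqrt (fact (nat \<lfloor>a + b - c\<rfloor>) * fact (nat \<lfloor>a - b + c\<rfloor>)
      * fact (nat \<lfloor>- a + b + c\<rfloor>) / fact (nat \<lfloor>a + b + c\<rfloor> + 1))"

text \<open>Racah-Wigner 6j-symbol via the Racah formula (VMK Ch. 9, eq. 9.2.1).\<close>
definition sixj :: "real \<Rightarrow> real \<Rightarrow> real \<Rightarrow> real \<Rightarrow> real \<Rightarrow> real \<Rightarrow> real" where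
  "sixj j1 j2 j3 j4 j5 j6 =
    (if triangle j1 j2 j3 \<and> triangle j1 j5 j6 \<and> triangle j4 j2 j6 \<and> triangle j4 j5 j3 then
      (let a1 = nat \<lfloor>j1 + j2 + j3\<rfloor>; a2 = nat \<lfloor>j1 + j5 + j6\<rfloor>;
           a3 = nat \<lfloor>j4 + j2 + j6\<rfloor>; a4 = nat \<lfloor>j4 + j5 + j3\<rfloor>;
           b1 = nat \<lfloor>j1 + j2 + j4 + j5\<rfloor>; b2 = nat \<lfloor>j2 + j3 + j5 + j6\<rfloor>;
           b3 = nat \<lfloor>j3 + j1 + j6 + j4\<rfloor>
       in tri_coeff j1 j2 j3 * tri_coeff j1 j5 j6 * tri_coeff j4 j2 j6 * tri_coeff j4 j5 j3 *
          (\<Sum>t \<in> {max (max a1 a2) (max a3 a4) .. min b1 (min b2 b3)}.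
             (-1) ^ t * fact (t + 1) /
             (fact (t - a1) * fact (t - a2) * fact (t - a3) * fact (t - a4) *
              fact (b1 - t) * fact (b2 - t) * fact (b3 - t))))
     else 0)"

end

theory Submission
  imports Defs
begin


fun ff :: "real \<Rightarrow> nat \<Rightarrow> real" where
  "ff x 0 = 1"
| "ff x (Suc m) = ff x m * (x - real m)"

lemma fact_add_poch: "(fact (n + m) :: real) = fact n * pochhammer (real n + 1) m"
  by (induction m) (simp_all add: pochhammer_Suc algebra_simps)

lemma fact_ff: "m \<le> n \<Longrightarrow> (fact n :: real) = fact (n - m) * ff (real n) m"
proof (induction m)
  case 0 then show ?case by simp
next
  case (Suc m)
  then have "(fact (n - m)::real) = real (n - m) * fact (n - Suc m)"
    by (metis Suc_diff_Suc Suc_le_lessD fact_Suc of_nat_Suc mult.commute)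
  with Suc show ?case by (simp add: of_nat_diff)
qed

lemma ff_zero: "n < m \<Longrightarrow> ff (real n) m = 0"
proof (induction m)
  case 0 then show ?case by simp
next
  case (Suc m)
  then show ?case by (cases "n < m") auto
qed

lemma tri_coeff_pos: "tri_coeff a b c > 0"
  unfolding tri_coeff_def by (intro real_sqrt_gt_zero divide_pos_pos mult_pos_pos) auto



definition Gt :: "nat \<Rightarrow> real \<Rightarrow> real \<Rightarrow> real \<Rightarrow> real \<Rightarrow> real \<Rightarrow> real \<Rightarrow> nat \<Rightarrow> real" where
  "Gt k A P Q R U V s = (-1)^s * real (k choose s) * pochhammer (A+2) s * ff Q (k-s) * ff R (k-s)
      * ff U s * ff V s / pochhammer (P+1) s"

lemma term_eq:
  fixes a1 p q r u v k s :: nat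
  assumes "s \<le> k" "k \<le> q + s" "k \<le> r + s" "s \<le> u" "s \<le> v"
  shows "(-1::real)^(a1+s) * fact (a1+s+1) / (fact s * fact (p+s) * fact (q+s-k) * fact (r+s-k)
          * fact (u-s) * fact (k-s) * fact (v-s))
    = (-1)^a1 * fact (a1+1) / (fact k * fact p * fact q * fact r * fact u * fact v)
       * Gt k (real a1) (real p) (real q) (real r) (real u) (real v) s"
proof -
  have e1: "(fact (a1+s+1)::real) = fact (a1+1) * pochhammer (real a1 + 2) s"
    using fact_add_poch[of "a1+1" s] by (simp add: add.commute add.left_commute)
  have e2: "(fact (p+s)::real) = fact p * pochhammer (real p + 1) s"
    using fact_add_poch[of p s] by simp
  have e3: "(fact q::real) = fact (q+s-k) * ff (real q) (k-s)"
    using fact_ff[of "k-s" q] assms by (simp add: add.commute)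
  have e4: "(fact r::real) = fact (r+s-k) * ff (real r) (k-s)"
    using fact_ff[of "k-s" r] assms by (simp add: add.commute)
  have e5: "(fact u::real) = fact (u-s) * ff (real u) s"
    using fact_ff[of s u] assms by simp
  have e6: "(fact v::real) = fact (v-s) * ff (real v) s"
    using fact_ff[of s v] assms by simp
  have e7: "(fact k::real) = real (k choose s) * fact s * fact (k-s)"
    using binomial_fact[of s k, where 'a=real] assms by simp
  have pp: "pochhammer (real p + 1) s > 0" by (rule pochhammer_pos) simp
  have c0: "real (k choose s) \<noteq> 0" using assms by simp
  have "ff (real q) (k-s) \<noteq> 0" using e3 by (metis fact_nonzero mult_zero_right)
  moreover have "ff (real r) (k-s) \<noteq> 0" using e4 by (metis fact_nonzero mult_zero_right)
  moreover have "ff (real u) s \<noteq> 0" using e5 by (metis fact_nonzero mult_zero_right)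
  moreover have "ff (real v) s \<noteq> 0" using e6 by (metis fact_nonzero mult_zero_right)
  ultimately show ?thesis
    unfolding Gt_def e1 e2 e3 e4 e5 e6 e7 using pp c0
    by (simp add: field_simps power_add)
qed

lemma racah_sum:
  fixes a1 a2 a3 a4 b1 b2 b3 p q r u v k :: nat
  assumes h: "a2 + p = a1" "a3 + q = a1 + k" "a4 + r = a1 + k" "b1 = a1 + u" "b2 = a1 + k" "b3 = a1 + v"
  shows "(\<Sum>t \<in> {max (max a1 a2) (max a3 a4) .. min b1 (min b2 b3)}. (-1::real) ^ t * fact (t + 1) /
             (fact (t - a1) * fact (t - a2) * fact (t - a3) * fact (t - a4) *
              fact (b1 - t) * fact (b2 - t) * fact (b3 - t)))
   = (-1)^a1 * fact (a1+1) / (fact k * fact p * fact q * fact r * fact u * fact v)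
      * (\<Sum>s\<le>k. Gt k (real a1) (real p) (real q) (real r) (real u) (real v) s)"
  (is "sum ?F {?M..?m} = ?K * _")
proof -
  have sub: "{?M..?m} \<subseteq> {a1..a1+k}" using h by auto
  have "sum ?F {?M..?m} = sum ?F ({a1..a1+k} \<inter> {?M..?m})"
    by (simp only: Int_absorb1[OF sub])
  also have "\<dots> = (\<Sum>t\<in>{a1..a1+k}. if t \<in> {?M..?m} then ?F t else 0)"
    by (rule sum.inter_restrict) simp
  also have "\<dots> = (\<Sum>s\<in>{0..k}. if s + a1 \<in> {?M..?m} then ?F (s+a1) else 0)"
    using sum.shift_bounds_cl_nat_ivl[of "\<lambda>t. if t \<in> {?M..?m} then ?F t else 0" 0 a1 k]
    by (simp add: add.commute)
  also have "\<dots> = (\<Sum>s\<le>k. ?K * Gt k (real a1) (real p) (real q) (real r) (real u) (real v) s)"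
    unfolding atMost_atLeast0[symmetric]
  proof (rule sum.cong[OF refl])
    fix s assume "s \<in> {..k}"
    then have sk: "s \<le> k" by simp
    show "(if s + a1 \<in> {?M..?m} then ?F (s+a1) else 0) = ?K * Gt k (real a1) (real p) (real q) (real r) (real u) (real v) s"
    proof (cases "k \<le> q + s \<and> k \<le> r + s \<and> s \<le> u \<and> s \<le> v")
      case True
      then have inr: "s + a1 \<in> {?M..?m}" using h sk by auto
      have eqs: "a1 + s - a2 = p + s" "a1 + s - a3 = q + s - k" "a1 + s - a4 = r + s - k"
        "b1 - (a1 + s) = u - s" "b2 - (a1+s) = k - s" "b3 - (a1+s) = v - s"
        using h True sk by auto
      show ?thesis using inr term_eq[of s k q r u v a1 p] True sk
        by (simp add: eqs add.commute[of s a1])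
    next
      case False
      then have inr: "s + a1 \<notin> {?M..?m}" using h sk by auto
      have "Gt k (real a1) (real p) (real q) (real r) (real u) (real v) s = 0"
        using False sk unfolding Gt_def by (auto simp: ff_zero)
      then show ?thesis using inr by simp
    qed
  qed
  also have "\<dots> = ?K * (\<Sum>s\<le>k. Gt k (real a1) (real p) (real q) (real r) (real u) (real v) s)"
    by (simp add: sum_distrib_left)
  finally show ?thesis .
qed



lemma sum2: "0 \<le> P \<Longrightarrow> (\<Sum>s\<le>2. Gt 2 A P Q R U V s) = Q*(Q-1)*R*(R-1) - 2*(A+2)*Q*R*U*V/(P+1)
   + (A+2)*(A+3)*U*(U-1)*V*(V-1)/((P+1)*(P+2))"
  by (simp add: Gt_def numeral_2_eq_2 pochhammer_Suc) (simp add: field_simps)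

lemma sum3: "0 \<le> P \<Longrightarrow> (\<Sum>s\<le>3. Gt 3 A P Q R U V s) = Q*(Q-1)*(Q-2)*R*(R-1)*(R-2)
   - 3*(A+2)*Q*(Q-1)*R*(R-1)*U*V/(P+1)
   + 3*(A+2)*(A+3)*Q*R*U*(U-1)*V*(V-1)/((P+1)*(P+2))
   - (A+2)*(A+3)*(A+4)*U*(U-1)*(U-2)*V*(V-1)*(V-2)/((P+1)*(P+2)*(P+3))"
  by (simp add: Gt_def numeral_3_eq_3 pochhammer_Suc) (simp add: field_simps)

lemma sum1: "0 \<le> P \<Longrightarrow> (\<Sum>s\<le>1. Gt 1 A P Q R U V s) = Q*R - (A+2)*U*V/(P+1)"
  by (simp add: Gt_def) (simp add: field_simps)

lemma Q2_poly: fixes P U V D :: real assumes "D * (P + 1) = 2 * U * V"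
  shows "D^2 * ((U+D)*(U+D-1)*(V+D)*(V+D-1)*(P+1)*(P+2) - 2*(P+2*U+2*V+2*D)*(U+D)*(V+D)*U*V*(P+2)
      + (P+2*U+2*V+2*D)*(P+2*U+2*V+2*D+1)*U*(U-1)*V*(V-1)) = 2*U*V*D^4 - 2*U*V*D^5 + 6*U*V^2*D^3 - 8*U*V^2*D^4 + 4*U*V^3*D^2 - 10*U*V^3*D^3 - 4*U*V^4*D^2 + 6*U^2*V*D^3 - 8*U^2*V*D^4 + 18*U^2*V^2*D^2 - 30*U^2*V^2*D^3 + 12*U^2*V^3*D - 34*U^2*V^3*D^2 - 12*U^2*V^4*D + 4*U^3*V*D^2 - 10*U^3*V*D^3 + 12*U^3*V^2*D - 34*U^3*V^2*D^2 + 8*U^3*V^3 - 32*U^3*V^3*D - 8*U^3*V^4 - 4*U^4*V*D^2 - 12*U^4*V^2*D - 8*U^4*V^3"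
  using assms by algebra



lemma T2_pos: fixes x y z :: real assumes "0 \<le> x" "0 \<le> y" "0 \<le> z"
  shows "0 < 144 + 312*z + 268*z^2 + 114*z^3 + 24*z^4 + 2*z^5 + 384*y + 728*y*z + 536*y*z^2 + 190*y*z^3 + 32*y*z^4 + 2*y*z^5 + 372*y^2 + 586*y^2*z + 340*y^2*z^2 + 86*y^2*z^3 + 8*y^2*z^4 + 156*y^3 + 190*y^3*z + 76*y^3*z^2 + 10*y^3*z^3 + 24*y^4 + 20*y^4*z + 4*y^4*z^2 + 384*x + 728*x*z + 536*x*z^2 + 190*x*z^3 + 32*x*z^4 + 2*x*z^5 + 988*x*y + 1622*x*y*z + 1012*x*y*z^2 + 296*x*y*z^3 + 40*x*y*z^4 + 2*x*y*z^5 + 914*x*y^2 + 1220*x*y^2*z + 582*x*y^2*z^2 + 116*x*y^2*z^3 + 8*x*y^2*z^4 + 362*x*y^3 + 358*x*y^3*z + 110*x*y^3*z^2 + 10*x*y^3*z^3 + 52*x*y^4 + 32*x*y^4*z + 4*x*y^4*z^2 + 372*x^2 + 586*x^2*z + 340*x^2*z^2 + 86*x^2*z^3 + 8*x^2*z^4 + 914*x^2*y + 1220*x^2*y*z + 582*x^2*y*z^2 + 116*x^2*y*z^3 + 8*x^2*y*z^4 + 792*x^2*y^2 + 822*x^2*y^2*z + 276*x^2*y^2*z^2 + 30*x^2*y^2*z^3 + 286*x^2*y^3 + 200*x^2*y^3*z + 34*x^2*y^3*z^2 + 36*x^2*y^4 + 12*x^2*y^4*z + 156*x^3 + 190*x^3*z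 + 76*x^3*z^2 + 10*x^3*z^3 + 362*x^3*y + 358*x^3*y*z + 110*x^3*y*z^2 + 10*x^3*y*z^3 + 286*x^3*y^2 + 200*x^3*y^2*z + 34*x^3*y^2*z^2 + 88*x^3*y^3 + 32*x^3*y^3*z + 8*x^3*y^4 + 24*x^4 + 20*x^4*z + 4*x^4*z^2 + 52*x^4*y + 32*x^4*y*z + 4*x^4*y*z^2 + 36*x^4*y^2 + 12*x^4*y^2*z + 8*x^4*y^3"
  using assms by (intro add_pos_nonneg mult_nonneg_nonneg zero_le_power; simp)

lemma T3_pos: fixes x y z :: real assumes "0 \<le> x" "0 \<le> y" "0 \<le> z"
  shows "0 < 864 + 4176*z + 8616*z^2 + 9916*z^3 + 6968*z^4 + 3064*z^5 + 824*z^6 + 124*z^7 + 8*z^8 + 3744*y + 16224*y*z + 29688*y*z^2 + 29904*y*z^3 + 18084*y*z^4 + 6692*y*z^5 + 1468*y*z^6 + 172*y*z^7 + 8*y*z^8 + 6648*y^2 + 25484*y^2*z + 40480*y^2*z^2 + 34548*y^2*z^3 + 17108*y^2*z^4 + 4912*y^2*z^5 + 756*y^2*z^6 + 48*y^2*z^7 + 6192*y^3 + 20640*y^3*z + 27660*y^3*z^2 + 19132*y^3*z^3 + 7220*y^3*z^4 + 1412*y^3*z^5 + 112*y^3*z^6 + 3192*y^4 + 9044*y^4*z + 9812*y^4*z^2 + 5132*y^4*z^3 + 1300*y^4*z^4 + 128*y^4*z^5 + 864*y^5 + 2016*y^5*z + 1656*y^5*z^2 + 576*y^5*z^3 + 72*y^5*z^4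 + 96*y^6 + 176*y^6*z + 96*y^6*z^2 + 16*y^6*z^3 + 3744*x + 16224*x*z + 29688*x*z^2 + 29904*x*z^3 + 18084*x*z^4 + 6692*x*z^5 + 1468*x*z^6 + 172*x*z^7 + 8*x*z^8 + 14760*x*y + 57572*x*y*z + 93568*x*y*z^2 + 82428*x*y*z^3 + 42792*x*y*z^4 + 13284*x*y*z^5 + 2376*x*y*z^6 + 220*x*y*z^7 + 8*x*y*z^8 + 23692*x*y^2 + 81848*x*y^2*z + 115120*x*y^2*z^2 + 85276*x*y^2*z^3 + 35768*x*y^2*z^4 + 8428*x*y^2*z^5 + 1020*x*y^2*z^6 + 48*x*y^2*z^7 + 19800*x*y^3 + 59404*x*y^3*z + 69920*x*y^3*z^2 + 41304*x*y^3*z^3 + 12840*x*y^3*z^4 + 1964*x*y^3*z^5 + 112*x*y^3*z^6 + 9076*x*y^4 + 23056*x*y^4*z + 21632*x*y^4*z^2 + 9376*x*y^4*z^3 + 1852*x*y^4*z^4 + 128*x*y^4*z^5 + 2160*x*y^5 + 4488*x*y^5*z + 3096*x*y^5*z^2 + 840*x*y^5*z^3 + 72*x*y^5*z^4 + 208*x*y^6 + 336*x*y^6*z + 144*x*y^6*z^2 + 16*x*y^6*z^3 + 6648*x^2 + 25484*x^2*z + 40480*x^2*z^2 + 34548*x^2*z^3 + 17108*x^2*z^4 + 4912*x^2*z^5 + 756*x^2*z^6 + 48*x^2*z^7 + 23692*x^2*y + 81848*x^2*y*z + 115120*x^2*y*z^2 + 85276*x^2*y*z^3 + 35768*x^2*y*z^4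 + 8428*x^2*y*z^5 + 1020*x^2*y*z^6 + 48*x^2*y*z^7 + 33912*x^2*y^2 + 103452*x^2*y^2*z + 124560*x^2*y^2*z^2 + 75936*x^2*y^2*z^3 + 24720*x^2*y^2*z^4 + 4068*x^2*y^2*z^5 + 264*x^2*y^2*z^6 + 24848*x^2*y^3 + 65340*x^2*y^3*z + 64428*x^2*y^3*z^2 + 29996*x^2*y^3*z^3 + 6612*x^2*y^3*z^4 + 552*x^2*y^3*z^5 + 9756*x^2*y^4 + 21444*x^2*y^4*z + 16188*x^2*y^4*z^2 + 5052*x^2*y^4*z^3 + 552*x^2*y^4*z^4 + 1920*x^2*y^5 + 3384*x^2*y^5*z + 1728*x^2*y^5*z^2 + 264*x^2*y^5*z^3 + 144*x^2*y^6 + 192*x^2*y^6*z + 48*x^2*y^6*z^2 + 6192*x^3 + 20640*x^3*z + 27660*x^3*z^2 + 19132*x^3*z^3 + 7220*x^3*z^4 + 1412*x^3*z^5 + 112*x^3*z^6 + 19800*x^3*y + 59404*x^3*y*z + 69920*x^3*y*z^2 + 41304*x^3*y*z^3 + 12840*x^3*y*z^4 + 1964*x^3*y*z^5 + 112*x^3*y*z^6 + 24848*x^3*y^2 + 65340*x^3*y^2*z + 64428*x^3*y^2*z^2 + 29996*x^3*y^2*z^3 + 6612*x^3*y^2*z^4 + 552*x^3*y^2*z^5 + 15480*x^3*y^3 + 34568*x^3*y^3*z + 26728*x^3*y^3*z^2 + 8632*x^3*y^3*z^3 + 992*x^3*y^3*z^4 + 4928*x^3*y^4 + 8968*x^3*y^4*z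 + 4848*x^3*y^4*z^2 + 808*x^3*y^4*z^3 + 720*x^3*y^5 + 1008*x^3*y^5*z + 288*x^3*y^5*z^2 + 32*x^3*y^6 + 32*x^3*y^6*z + 3192*x^4 + 9044*x^4*z + 9812*x^4*z^2 + 5132*x^4*z^3 + 1300*x^4*z^4 + 128*x^4*z^5 + 9076*x^4*y + 23056*x^4*y*z + 21632*x^4*y*z^2 + 9376*x^4*y*z^3 + 1852*x^4*y*z^4 + 128*x^4*y*z^5 + 9756*x^4*y^2 + 21444*x^4*y^2*z + 16188*x^4*y^2*z^2 + 5052*x^4*y^2*z^3 + 552*x^4*y^2*z^4 + 4928*x^4*y^3 + 8968*x^4*y^3*z + 4848*x^4*y^3*z^2 + 808*x^4*y^3*z^3 + 1152*x^4*y^4 + 1632*x^4*y^4*z + 480*x^4*y^4*z^2 + 96*x^4*y^5 + 96*x^4*y^5*z + 864*x^5 + 2016*x^5*z + 1656*x^5*z^2 + 576*x^5*z^3 + 72*x^5*z^4 + 2160*x^5*y + 4488*x^5*y*z + 3096*x^5*y*z^2 + 840*x^5*y*z^3 + 72*x^5*y*z^4 + 1920*x^5*y^2 + 3384*x^5*y^2*z + 1728*x^5*y^2*z^2 + 264*x^5*y^2*z^3 + 720*x^5*y^3 + 1008*x^5*y^3*z + 288*x^5*y^3*z^2 + 96*x^5*y^4 + 96*x^5*y^4*z + 96*x^6 + 176*x^6*z + 96*x^6*z^2 + 16*x^6*z^3 + 208*x^6*y + 336*x^6*y*z + 144*x^6*y*z^2 + 16*x^6*y*z^3 + 144*x^6*y^2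 + 192*x^6*y^2*z + 48*x^6*y^2*z^2 + 32*x^6*y^3 + 32*x^6*y^3*z"
  using assms by (intro add_pos_nonneg mult_nonneg_nonneg zero_le_power; simp)

lemma S2_neg: fixes U V D :: real assumes "1 \<le> U" "1 \<le> V" "1 \<le> D"
  shows "2*U*V*D^4 - 2*U*V*D^5 + 6*U*V^2*D^3 - 8*U*V^2*D^4 + 4*U*V^3*D^2 - 10*U*V^3*D^3 - 4*U*V^4*D^2 + 6*U^2*V*D^3 - 8*U^2*V*D^4 + 18*U^2*V^2*D^2 - 30*U^2*V^2*D^3 + 12*U^2*V^3*D - 34*U^2*V^3*D^2 - 12*U^2*V^4*D + 4*U^3*V*D^2 - 10*U^3*V*D^3 + 12*U^3*V^2*D - 34*U^3*V^2*D^2 + 8*U^3*V^3 - 32*U^3*V^3*D - 8*U^3*V^4 - 4*U^4*V*D^2 - 12*U^4*V^2*D - 8*U^4*V^3 < 0"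
proof -
  have e: "2*U*V*D^4 - 2*U*V*D^5 + 6*U*V^2*D^3 - 8*U*V^2*D^4 + 4*U*V^3*D^2 - 10*U*V^3*D^3 - 4*U*V^4*D^2 + 6*U^2*V*D^3 - 8*U^2*V*D^4 + 18*U^2*V^2*D^2 - 30*U^2*V^2*D^3 + 12*U^2*V^3*D - 34*U^2*V^3*D^2 - 12*U^2*V^4*D + 4*U^3*V*D^2 - 10*U^3*V*D^3 + 12*U^3*V^2*D - 34*U^3*V^2*D^2 + 8*U^3*V^3 - 32*U^3*V^3*D - 8*U^3*V^4 - 4*U^4*V*D^2 - 12*U^4*V^2*D - 8*U^4*V^3 = - (144 + 312*(D - 1) + 268*(D - 1)^2 + 114*(D - 1)^3 + 24*(D - 1)^4 + 2*(D - 1)^5 + 384*(V - 1) + 728*(V - 1)*(D - 1) + 536*(V - 1)*(D - 1)^2 + 190*(V - 1)*(D - 1)^3 + 32*(V - 1)*(D - 1)^4 + 2*(V - 1)*(D - 1)^5 + 372*(V - 1)^2 + 586*(V - 1)^2*(D - 1) + 340*(V - 1)^2*(D - 1)^2 + 86*(V - 1)^2*(D - 1)^3 + 8*(V - 1)^2*(D - 1)^4 + 156*(V - 1)^3 + 190*(V - 1)^3*(D - 1) + 76*(V - 1)^3*(D - 1)^2 + 10*(V - 1)^3*(D - 1)^3 + 24*(V - 1)^4 + 20*(V - 1)^4*(D - 1) + 4*(V - 1)^4*(D - 1)^2 + 384*(U - 1) + 728*(U - 1)*(D - 1) + 536*(U - 1)*(D - 1)^2 + 190*(U - 1)*(D -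 1)^3 + 32*(U - 1)*(D - 1)^4 + 2*(U - 1)*(D - 1)^5 + 988*(U - 1)*(V - 1) + 1622*(U - 1)*(V - 1)*(D - 1) + 1012*(U - 1)*(V - 1)*(D - 1)^2 + 296*(U - 1)*(V - 1)*(D - 1)^3 + 40*(U - 1)*(V - 1)*(D - 1)^4 + 2*(U - 1)*(V - 1)*(D - 1)^5 + 914*(U - 1)*(V - 1)^2 + 1220*(U - 1)*(V - 1)^2*(D - 1) + 582*(U - 1)*(V - 1)^2*(D - 1)^2 + 116*(U - 1)*(V - 1)^2*(D - 1)^3 + 8*(U - 1)*(V - 1)^2*(D - 1)^4 + 362*(U - 1)*(V - 1)^3 + 358*(U - 1)*(V - 1)^3*(D - 1) + 110*(U - 1)*(V - 1)^3*(D - 1)^2 + 10*(U - 1)*(V - 1)^3*(D - 1)^3 + 52*(U - 1)*(V - 1)^4 + 32*(U - 1)*(V - 1)^4*(D - 1) + 4*(U - 1)*(V - 1)^4*(D - 1)^2 + 372*(U - 1)^2 + 586*(U - 1)^2*(D - 1) + 340*(U - 1)^2*(D - 1)^2 + 86*(U - 1)^2*(D - 1)^3 + 8*(U - 1)^2*(D - 1)^4 + 914*(U - 1)^2*(V - 1) + 1220*(U - 1)^2*(V - 1)*(D - 1) + 582*(U - 1)^2*(V - 1)*(D - 1)^2 + 116*(U - 1)^2*(V - 1)*(D - 1)^3 + 8*(U - 1)^2*(V - 1)*(D - 1)^4 + 792*(U - 1)^2*(V - 1)^2 + 822*(U - 1)^2*(V - 1)^2*(D - 1) + 276*(U - 1)^2*(V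 - 1)^2*(D - 1)^2 + 30*(U - 1)^2*(V - 1)^2*(D - 1)^3 + 286*(U - 1)^2*(V - 1)^3 + 200*(U - 1)^2*(V - 1)^3*(D - 1) + 34*(U - 1)^2*(V - 1)^3*(D - 1)^2 + 36*(U - 1)^2*(V - 1)^4 + 12*(U - 1)^2*(V - 1)^4*(D - 1) + 156*(U - 1)^3 + 190*(U - 1)^3*(D - 1) + 76*(U - 1)^3*(D - 1)^2 + 10*(U - 1)^3*(D - 1)^3 + 362*(U - 1)^3*(V - 1) + 358*(U - 1)^3*(V - 1)*(D - 1) + 110*(U - 1)^3*(V - 1)*(D - 1)^2 + 10*(U - 1)^3*(V - 1)*(D - 1)^3 + 286*(U - 1)^3*(V - 1)^2 + 200*(U - 1)^3*(V - 1)^2*(D - 1) + 34*(U - 1)^3*(V - 1)^2*(D - 1)^2 + 88*(U - 1)^3*(V - 1)^3 + 32*(U - 1)^3*(V - 1)^3*(D - 1) + 8*(U - 1)^3*(V - 1)^4 + 24*(U - 1)^4 + 20*(U - 1)^4*(D - 1) + 4*(U - 1)^4*(D - 1)^2 + 52*(U - 1)^4*(V - 1) + 32*(U - 1)^4*(V - 1)*(D - 1) + 4*(U - 1)^4*(V - 1)*(D - 1)^2 + 36*(U - 1)^4*(V - 1)^2 + 12*(U - 1)^4*(V - 1)^2*(D - 1) + 8*(U - 1)^4*(V - 1)^3)" by algebra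
  show ?thesis unfolding e neg_less_0_iff_less by (rule T2_pos) (use assms in simp_all)
qed

lemma S3_neg: fixes U V D :: real assumes "1 \<le> U" "1 \<le> V" "1 \<le> D"
  shows "24*U*V*D^5 - 52*U*V*D^6 + 36*U*V*D^7 - 8*U*V*D^8 + 72*U*V^2*D^4 - 208*U*V^2*D^5 + 180*U*V^2*D^6 - 48*U*V^2*D^7 + 48*U*V^3*D^3 - 260*U*V^3*D^4 + 324*U*V^3*D^5 - 112*U*V^3*D^6 - 104*U*V^4*D^3 + 252*U*V^4*D^4 - 128*U*V^4*D^5 + 72*U*V^5*D^3 - 72*U*V^5*D^4 - 16*U*V^6*D^3 + 72*U^2*V*D^4 - 208*U^2*V*D^5 + 180*U^2*V*D^6 - 48*U^2*V*D^7 + 216*U^2*V^2*D^3 - 780*U^2*V^2*D^4 + 828*U^2*V^2*D^5 - 264*U^2*V^2*D^6 + 144*U^2*V^3*D^2 - 884*U^2*V^3*D^3 + 1332*U^2*V^3*D^4 - 552*U^2*V^3*D^5 - 312*U^2*V^4*D^2 + 900*U^2*V^4*D^3 - 552*U^2*V^4*D^4 + 216*U^2*V^5*D^2 - 264*U^2*V^5*D^3 - 48*U^2*V^6*D^2 + 48*U^3*V*D^3 - 260*U^3*V*D^4 + 324*U^3*V*D^5 - 112*U^3*V*D^6 + 144*U^3*V^2*D^2 - 884*U^3*V^2*D^3 + 1332*U^3*V^2*D^4 - 552*U^3*V^2*D^5 + 96*U^3*V^3*D - 832*U^3*V^3*D^2 + 1800*U^3*V^3*D^3 - 992*U^3*V^3*D^4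 - 208*U^3*V^4*D + 936*U^3*V^4*D^2 - 808*U^3*V^4*D^3 + 144*U^3*V^5*D - 288*U^3*V^5*D^2 - 32*U^3*V^6*D - 104*U^4*V*D^3 + 252*U^4*V*D^4 - 128*U^4*V*D^5 - 312*U^4*V^2*D^2 + 900*U^4*V^2*D^3 - 552*U^4*V^2*D^4 - 208*U^4*V^3*D + 936*U^4*V^3*D^2 - 808*U^4*V^3*D^3 + 288*U^4*V^4*D - 480*U^4*V^4*D^2 - 96*U^4*V^5*D + 72*U^5*V*D^3 - 72*U^5*V*D^4 + 216*U^5*V^2*D^2 - 264*U^5*V^2*D^3 + 144*U^5*V^3*D - 288*U^5*V^3*D^2 - 96*U^5*V^4*D - 16*U^6*V*D^3 - 48*U^6*V^2*D^2 - 32*U^6*V^3*D < 0"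
proof -
  have e: "24*U*V*D^5 - 52*U*V*D^6 + 36*U*V*D^7 - 8*U*V*D^8 + 72*U*V^2*D^4 - 208*U*V^2*D^5 + 180*U*V^2*D^6 - 48*U*V^2*D^7 + 48*U*V^3*D^3 - 260*U*V^3*D^4 + 324*U*V^3*D^5 - 112*U*V^3*D^6 - 104*U*V^4*D^3 + 252*U*V^4*D^4 - 128*U*V^4*D^5 + 72*U*V^5*D^3 - 72*U*V^5*D^4 - 16*U*V^6*D^3 + 72*U^2*V*D^4 - 208*U^2*V*D^5 + 180*U^2*V*D^6 - 48*U^2*V*D^7 + 216*U^2*V^2*D^3 - 780*U^2*V^2*D^4 + 828*U^2*V^2*D^5 - 264*U^2*V^2*D^6 + 144*U^2*V^3*D^2 - 884*U^2*V^3*D^3 + 1332*U^2*V^3*D^4 - 552*U^2*V^3*D^5 - 312*U^2*V^4*D^2 + 900*U^2*V^4*D^3 - 552*U^2*V^4*D^4 + 216*U^2*V^5*D^2 - 264*U^2*V^5*D^3 - 48*U^2*V^6*D^2 + 48*U^3*V*D^3 - 260*U^3*V*D^4 + 324*U^3*V*D^5 - 112*U^3*V*D^6 + 144*U^3*V^2*D^2 - 884*U^3*V^2*D^3 + 1332*U^3*V^2*D^4 - 552*U^3*V^2*D^5 + 96*U^3*V^3*D - 832*U^3*V^3*D^2 + 1800*U^3*V^3*D^3 - 992*U^3*V^3*D^4 - 208*U^3*V^4*D + 936*U^3*V^4*D^2 - 808*U^3*V^4*D^3 + 144*U^3*V^5*D - 288*U^3*V^5*D^2 - 32*U^3*V^6*D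 - 104*U^4*V*D^3 + 252*U^4*V*D^4 - 128*U^4*V*D^5 - 312*U^4*V^2*D^2 + 900*U^4*V^2*D^3 - 552*U^4*V^2*D^4 - 208*U^4*V^3*D + 936*U^4*V^3*D^2 - 808*U^4*V^3*D^3 + 288*U^4*V^4*D - 480*U^4*V^4*D^2 - 96*U^4*V^5*D + 72*U^5*V*D^3 - 72*U^5*V*D^4 + 216*U^5*V^2*D^2 - 264*U^5*V^2*D^3 + 144*U^5*V^3*D - 288*U^5*V^3*D^2 - 96*U^5*V^4*D - 16*U^6*V*D^3 - 48*U^6*V^2*D^2 - 32*U^6*V^3*D = - (864 + 4176*(D - 1) + 8616*(D - 1)^2 + 9916*(D - 1)^3 + 6968*(D - 1)^4 + 3064*(D - 1)^5 + 824*(D - 1)^6 + 124*(D - 1)^7 + 8*(D - 1)^8 + 3744*(V - 1) + 16224*(V - 1)*(D - 1) + 29688*(V - 1)*(D - 1)^2 + 29904*(V - 1)*(D - 1)^3 + 18084*(V - 1)*(D - 1)^4 + 6692*(V - 1)*(D - 1)^5 + 1468*(V - 1)*(D - 1)^6 + 172*(V - 1)*(D - 1)^7 + 8*(V - 1)*(D - 1)^8 + 6648*(V - 1)^2 + 25484*(V - 1)^2*(D - 1) + 40480*(V - 1)^2*(D - 1)^2 + 34548*(V - 1)^2*(D - 1)^3 + 17108*(V - 1)^2*(D - 1)^4 + 4912*(V - 1)^2*(D - 1)^5 + 756*(V - 1)^2*(D - 1)^6 + 48*(V - 1)^2*(D - 1)^7 + 6192*(V - 1)^3 + 20640*(V -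 1)^3*(D - 1) + 27660*(V - 1)^3*(D - 1)^2 + 19132*(V - 1)^3*(D - 1)^3 + 7220*(V - 1)^3*(D - 1)^4 + 1412*(V - 1)^3*(D - 1)^5 + 112*(V - 1)^3*(D - 1)^6 + 3192*(V - 1)^4 + 9044*(V - 1)^4*(D - 1) + 9812*(V - 1)^4*(D - 1)^2 + 5132*(V - 1)^4*(D - 1)^3 + 1300*(V - 1)^4*(D - 1)^4 + 128*(V - 1)^4*(D - 1)^5 + 864*(V - 1)^5 + 2016*(V - 1)^5*(D - 1) + 1656*(V - 1)^5*(D - 1)^2 + 576*(V - 1)^5*(D - 1)^3 + 72*(V - 1)^5*(D - 1)^4 + 96*(V - 1)^6 + 176*(V - 1)^6*(D - 1) + 96*(V - 1)^6*(D - 1)^2 + 16*(V - 1)^6*(D - 1)^3 + 3744*(U - 1) + 16224*(U - 1)*(D - 1) + 29688*(U - 1)*(D - 1)^2 + 29904*(U - 1)*(D - 1)^3 + 18084*(U - 1)*(D - 1)^4 + 6692*(U - 1)*(D - 1)^5 + 1468*(U - 1)*(D - 1)^6 + 172*(U - 1)*(D - 1)^7 + 8*(U - 1)*(D - 1)^8 + 14760*(U - 1)*(V - 1) + 57572*(U - 1)*(V - 1)*(D - 1) + 93568*(U - 1)*(V - 1)*(D - 1)^2 + 82428*(U - 1)*(V - 1)*(D - 1)^3 + 42792*(U - 1)*(V - 1)*(D - 1)^4 + 13284*(U - 1)*(V - 1)*(D - 1)^5 + 2376*(U - 1)*(V - 1)*(D - 1)^6 + 220*(U - 1)*(V - 1)*(D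 - 1)^7 + 8*(U - 1)*(V - 1)*(D - 1)^8 + 23692*(U - 1)*(V - 1)^2 + 81848*(U - 1)*(V - 1)^2*(D - 1) + 115120*(U - 1)*(V - 1)^2*(D - 1)^2 + 85276*(U - 1)*(V - 1)^2*(D - 1)^3 + 35768*(U - 1)*(V - 1)^2*(D - 1)^4 + 8428*(U - 1)*(V - 1)^2*(D - 1)^5 + 1020*(U - 1)*(V - 1)^2*(D - 1)^6 + 48*(U - 1)*(V - 1)^2*(D - 1)^7 + 19800*(U - 1)*(V - 1)^3 + 59404*(U - 1)*(V - 1)^3*(D - 1) + 69920*(U - 1)*(V - 1)^3*(D - 1)^2 + 41304*(U - 1)*(V - 1)^3*(D - 1)^3 + 12840*(U - 1)*(V - 1)^3*(D - 1)^4 + 1964*(U - 1)*(V - 1)^3*(D - 1)^5 + 112*(U - 1)*(V - 1)^3*(D - 1)^6 + 9076*(U - 1)*(V - 1)^4 + 23056*(U - 1)*(V - 1)^4*(D - 1) + 21632*(U - 1)*(V - 1)^4*(D - 1)^2 + 9376*(U - 1)*(V - 1)^4*(D - 1)^3 + 1852*(U - 1)*(V - 1)^4*(D - 1)^4 + 128*(U - 1)*(V - 1)^4*(D - 1)^5 + 2160*(U - 1)*(V - 1)^5 + 4488*(U - 1)*(V - 1)^5*(D - 1) + 3096*(U - 1)*(V - 1)^5*(D - 1)^2 + 840*(U - 1)*(V - 1)^5*(D - 1)^3 + 72*(U - 1)*(V - 1)^5*(D - 1)^4 + 208*(U - 1)*(V - 1)^6 + 336*(U - 1)*(V - 1)^6*(D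 - 1) + 144*(U - 1)*(V - 1)^6*(D - 1)^2 + 16*(U - 1)*(V - 1)^6*(D - 1)^3 + 6648*(U - 1)^2 + 25484*(U - 1)^2*(D - 1) + 40480*(U - 1)^2*(D - 1)^2 + 34548*(U - 1)^2*(D - 1)^3 + 17108*(U - 1)^2*(D - 1)^4 + 4912*(U - 1)^2*(D - 1)^5 + 756*(U - 1)^2*(D - 1)^6 + 48*(U - 1)^2*(D - 1)^7 + 23692*(U - 1)^2*(V - 1) + 81848*(U - 1)^2*(V - 1)*(D - 1) + 115120*(U - 1)^2*(V - 1)*(D - 1)^2 + 85276*(U - 1)^2*(V - 1)*(D - 1)^3 + 35768*(U - 1)^2*(V - 1)*(D - 1)^4 + 8428*(U - 1)^2*(V - 1)*(D - 1)^5 + 1020*(U - 1)^2*(V - 1)*(D - 1)^6 + 48*(U - 1)^2*(V - 1)*(D - 1)^7 + 33912*(U - 1)^2*(V - 1)^2 + 103452*(U - 1)^2*(V - 1)^2*(D - 1) + 124560*(U - 1)^2*(V - 1)^2*(D - 1)^2 + 75936*(U - 1)^2*(V - 1)^2*(D - 1)^3 + 24720*(U - 1)^2*(V - 1)^2*(D - 1)^4 + 4068*(U - 1)^2*(V - 1)^2*(D - 1)^5 + 264*(U - 1)^2*(V - 1)^2*(D - 1)^6 + 24848*(U - 1)^2*(V - 1)^3 + 65340*(U - 1)^2*(V - 1)^3*(D - 1) + 64428*(U - 1)^2*(V - 1)^3*(D - 1)^2 + 29996*(U - 1)^2*(V - 1)^3*(D - 1)^3 + 6612*(U - 1)^2*(V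 - 1)^3*(D - 1)^4 + 552*(U - 1)^2*(V - 1)^3*(D - 1)^5 + 9756*(U - 1)^2*(V - 1)^4 + 21444*(U - 1)^2*(V - 1)^4*(D - 1) + 16188*(U - 1)^2*(V - 1)^4*(D - 1)^2 + 5052*(U - 1)^2*(V - 1)^4*(D - 1)^3 + 552*(U - 1)^2*(V - 1)^4*(D - 1)^4 + 1920*(U - 1)^2*(V - 1)^5 + 3384*(U - 1)^2*(V - 1)^5*(D - 1) + 1728*(U - 1)^2*(V - 1)^5*(D - 1)^2 + 264*(U - 1)^2*(V - 1)^5*(D - 1)^3 + 144*(U - 1)^2*(V - 1)^6 + 192*(U - 1)^2*(V - 1)^6*(D - 1) + 48*(U - 1)^2*(V - 1)^6*(D - 1)^2 + 6192*(U - 1)^3 + 20640*(U - 1)^3*(D - 1) + 27660*(U - 1)^3*(D - 1)^2 + 19132*(U - 1)^3*(D - 1)^3 + 7220*(U - 1)^3*(D - 1)^4 + 1412*(U - 1)^3*(D - 1)^5 + 112*(U - 1)^3*(D - 1)^6 + 19800*(U - 1)^3*(V - 1) + 59404*(U - 1)^3*(V - 1)*(D - 1) + 69920*(U - 1)^3*(V - 1)*(D - 1)^2 + 41304*(U - 1)^3*(V - 1)*(D - 1)^3 + 12840*(U - 1)^3*(V - 1)*(D - 1)^4 + 1964*(U - 1)^3*(V - 1)*(D - 1)^5 + 112*(U - 1)^3*(V - 1)*(D - 1)^6 + 24848*(U - 1)^3*(V - 1)^2 + 65340*(U - 1)^3*(V - 1)^2*(D - 1) + 64428*(U - 1)^3*(V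 - 1)^2*(D - 1)^2 + 29996*(U - 1)^3*(V - 1)^2*(D - 1)^3 + 6612*(U - 1)^3*(V - 1)^2*(D - 1)^4 + 552*(U - 1)^3*(V - 1)^2*(D - 1)^5 + 15480*(U - 1)^3*(V - 1)^3 + 34568*(U - 1)^3*(V - 1)^3*(D - 1) + 26728*(U - 1)^3*(V - 1)^3*(D - 1)^2 + 8632*(U - 1)^3*(V - 1)^3*(D - 1)^3 + 992*(U - 1)^3*(V - 1)^3*(D - 1)^4 + 4928*(U - 1)^3*(V - 1)^4 + 8968*(U - 1)^3*(V - 1)^4*(D - 1) + 4848*(U - 1)^3*(V - 1)^4*(D - 1)^2 + 808*(U - 1)^3*(V - 1)^4*(D - 1)^3 + 720*(U - 1)^3*(V - 1)^5 + 1008*(U - 1)^3*(V - 1)^5*(D - 1) + 288*(U - 1)^3*(V - 1)^5*(D - 1)^2 + 32*(U - 1)^3*(V - 1)^6 + 32*(U - 1)^3*(V - 1)^6*(D - 1) + 3192*(U - 1)^4 + 9044*(U - 1)^4*(D - 1) + 9812*(U - 1)^4*(D - 1)^2 + 5132*(U - 1)^4*(D - 1)^3 + 1300*(U - 1)^4*(D - 1)^4 + 128*(U - 1)^4*(D - 1)^5 + 9076*(U - 1)^4*(V - 1) + 23056*(U - 1)^4*(V - 1)*(D - 1) + 21632*(U - 1)^4*(V - 1)*(D - 1)^2 + 9376*(U - 1)^4*(V - 1)*(D - 1)^3 + 1852*(U - 1)^4*(V - 1)*(D - 1)^4 + 128*(U - 1)^4*(V - 1)*(D - 1)^5 + 9756*(U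 - 1)^4*(V - 1)^2 + 21444*(U - 1)^4*(V - 1)^2*(D - 1) + 16188*(U - 1)^4*(V - 1)^2*(D - 1)^2 + 5052*(U - 1)^4*(V - 1)^2*(D - 1)^3 + 552*(U - 1)^4*(V - 1)^2*(D - 1)^4 + 4928*(U - 1)^4*(V - 1)^3 + 8968*(U - 1)^4*(V - 1)^3*(D - 1) + 4848*(U - 1)^4*(V - 1)^3*(D - 1)^2 + 808*(U - 1)^4*(V - 1)^3*(D - 1)^3 + 1152*(U - 1)^4*(V - 1)^4 + 1632*(U - 1)^4*(V - 1)^4*(D - 1) + 480*(U - 1)^4*(V - 1)^4*(D - 1)^2 + 96*(U - 1)^4*(V - 1)^5 + 96*(U - 1)^4*(V - 1)^5*(D - 1) + 864*(U - 1)^5 + 2016*(U - 1)^5*(D - 1) + 1656*(U - 1)^5*(D - 1)^2 + 576*(U - 1)^5*(D - 1)^3 + 72*(U - 1)^5*(D - 1)^4 + 2160*(U - 1)^5*(V - 1) + 4488*(U - 1)^5*(V - 1)*(D - 1) + 3096*(U - 1)^5*(V - 1)*(D - 1)^2 + 840*(U - 1)^5*(V - 1)*(D - 1)^3 + 72*(U - 1)^5*(V - 1)*(D - 1)^4 + 1920*(U - 1)^5*(V - 1)^2 + 3384*(U - 1)^5*(V - 1)^2*(D - 1) + 1728*(U - 1)^5*(V - 1)^2*(D - 1)^2 + 264*(U - 1)^5*(V - 1)^2*(D - 1)^3 + 720*(U - 1)^5*(V - 1)^3 + 1008*(U - 1)^5*(V - 1)^3*(D - 1) + 288*(U - 1)^5*(V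 - 1)^3*(D - 1)^2 + 96*(U - 1)^5*(V - 1)^4 + 96*(U - 1)^5*(V - 1)^4*(D - 1) + 96*(U - 1)^6 + 176*(U - 1)^6*(D - 1) + 96*(U - 1)^6*(D - 1)^2 + 16*(U - 1)^6*(D - 1)^3 + 208*(U - 1)^6*(V - 1) + 336*(U - 1)^6*(V - 1)*(D - 1) + 144*(U - 1)^6*(V - 1)*(D - 1)^2 + 16*(U - 1)^6*(V - 1)*(D - 1)^3 + 144*(U - 1)^6*(V - 1)^2 + 192*(U - 1)^6*(V - 1)^2*(D - 1) + 48*(U - 1)^6*(V - 1)^2*(D - 1)^2 + 32*(U - 1)^6*(V - 1)^3 + 32*(U - 1)^6*(V - 1)^3*(D - 1))" by algebra
  show ?thesis unfolding e neg_less_0_iff_less by (rule T3_pos) (use assms in simp_all)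
qed



lemma Q3_poly: fixes P U V D :: real assumes "D * (P + 1) = 2 * U * V"
  shows "D^3 * ((U+D)*(U+D-1)*(U+D-2)*(V+D)*(V+D-1)*(V+D-2)*(P+1)*(P+2)*(P+3)
      - 3*(P+2*U+2*V+2*D-1)*(U+D)*(U+D-1)*(V+D)*(V+D-1)*U*V*(P+2)*(P+3)
      + 3*(P+2*U+2*V+2*D-1)*(P+2*U+2*V+2*D)*(U+D)*(V+D)*U*(U-1)*V*(V-1)*(P+3)
      - (P+2*U+2*V+2*D-1)*(P+2*U+2*V+2*D)*(P+2*U+2*V+2*D+1)*U*(U-1)*(U-2)*V*(V-1)*(V-2)) = 24*U*V*D^5 - 52*U*V*D^6 + 36*U*V*D^7 - 8*U*V*D^8 + 72*U*V^2*D^4 - 208*U*V^2*D^5 + 180*U*V^2*D^6 - 48*U*V^2*D^7 + 48*U*V^3*D^3 - 260*U*V^3*D^4 + 324*U*V^3*D^5 - 112*U*V^3*D^6 - 104*U*V^4*D^3 + 252*U*V^4*D^4 - 128*U*V^4*D^5 + 72*U*V^5*D^3 - 72*U*V^5*D^4 - 16*U*V^6*D^3 + 72*U^2*V*D^4 - 208*U^2*V*D^5 + 180*U^2*V*D^6 - 48*U^2*V*D^7 + 216*U^2*V^2*D^3 - 780*U^2*V^2*D^4 + 828*U^2*V^2*D^5 - 264*U^2*V^2*D^6 + 144*U^2*V^3*D^2 - 884*U^2*V^3*D^3 + 1332*U^2*V^3*D^4 - 552*U^2*V^3*D^5 - 312*U^2*V^4*D^2 + 900*U^2*V^4*D^3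 - 552*U^2*V^4*D^4 + 216*U^2*V^5*D^2 - 264*U^2*V^5*D^3 - 48*U^2*V^6*D^2 + 48*U^3*V*D^3 - 260*U^3*V*D^4 + 324*U^3*V*D^5 - 112*U^3*V*D^6 + 144*U^3*V^2*D^2 - 884*U^3*V^2*D^3 + 1332*U^3*V^2*D^4 - 552*U^3*V^2*D^5 + 96*U^3*V^3*D - 832*U^3*V^3*D^2 + 1800*U^3*V^3*D^3 - 992*U^3*V^3*D^4 - 208*U^3*V^4*D + 936*U^3*V^4*D^2 - 808*U^3*V^4*D^3 + 144*U^3*V^5*D - 288*U^3*V^5*D^2 - 32*U^3*V^6*D - 104*U^4*V*D^3 + 252*U^4*V*D^4 - 128*U^4*V*D^5 - 312*U^4*V^2*D^2 + 900*U^4*V^2*D^3 - 552*U^4*V^2*D^4 - 208*U^4*V^3*D + 936*U^4*V^3*D^2 - 808*U^4*V^3*D^3 + 288*U^4*V^4*D - 480*U^4*V^4*D^2 - 96*U^4*V^5*D + 72*U^5*V*D^3 - 72*U^5*V*D^4 + 216*U^5*V^2*D^2 - 264*U^5*V^2*D^3 + 144*U^5*V^3*D - 288*U^5*V^3*D^2 - 96*U^5*V^4*D - 16*U^6*V*D^3 - 48*U^6*V^2*D^2 - 32*U^6*V^3*D"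
  using assms by algebra

lemma clr2: fixes a b c x y :: real assumes "x \<noteq> 0" "y \<noteq> 0"
  shows "(a - b/x + c/(x*y)) * (x*y) = a*x*y - b*y + c"
  using assms by (simp add: field_simps)

lemma clr3: fixes a b c d x y z :: real assumes "x \<noteq> 0" "y \<noteq> 0" "z \<noteq> 0"
  shows "(a - b/x + c/(x*y) - d/(x*y*z)) * (x*y*z) = a*x*y*z - b*y*z + c*z - d"
  using assms by (simp add: field_simps)

lemma Q2_mul: fixes A P Q R U V :: real assumes "0 \<le> P"
  shows "(\<Sum>s\<le>2. Gt 2 A P Q R U V s) * ((P+1)*(P+2)) = Q*(Q-1)*R*(R-1)*(P+1)*(P+2) - 2*(A+2)*Q*R*U*V*(P+2)
   + (A+2)*(A+3)*U*(U-1)*V*(V-1)"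
  unfolding sum2[OF assms] using assms by (subst clr2) (simp_all add: algebra_simps)

lemma Q3_mul: fixes A P Q R U V :: real assumes "0 \<le> P"
  shows "(\<Sum>s\<le>3. Gt 3 A P Q R U V s) * ((P+1)*(P+2)*(P+3)) = Q*(Q-1)*(Q-2)*R*(R-1)*(R-2)*(P+1)*(P+2)*(P+3)
   - 3*(A+2)*Q*(Q-1)*R*(R-1)*U*V*(P+2)*(P+3)
   + 3*(A+2)*(A+3)*Q*R*U*(U-1)*V*(V-1)*(P+3)
   - (A+2)*(A+3)*(A+4)*U*(U-1)*(U-2)*V*(V-1)*(V-2)"
  unfolding sum3[OF assms] using assms by (subst clr3) (simp_all add: algebra_simps)



lemma sixj_eval:
  fixes h c d a b :: real and a1 a2 a3 a4 b1 b2 b3 p q r u v k :: nat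
  assumes tri: "triangle h c c" "triangle h a b" "triangle d c b" "triangle d a c"
    and e: "h + c + c = real a1" "h + a + b = real a2" "d + c + b = real a3" "d + a + c = real a4"
       "h + c + d + a = real b1" "c + c + a + b = real b2" "c + h + b + d = real b3"
    and n: "a2 + p = a1" "a3 + q = a1 + k" "a4 + r = a1 + k" "b1 = a1 + u" "b2 = a1 + k" "b3 = a1 + v"
  shows "sixj h c c d a b = tri_coeff h c c * tri_coeff h a b * tri_coeff d c b * tri_coeff d a c *
      ((-1)^a1 * fact (a1+1) / (fact k * fact p * fact q * fact r * fact u * fact v)
      * (\<Sum>s\<le>k. Gt k (real a1) (real p) (real q) (real r) (real u) (real v) s))"
  unfolding sixj_def Let_def
  apply (simp only: tri e floor_of_nat nat_int simp_thms if_True)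
  by (simp only: racah_sum[OF n])

lemma sixj_zero_iff:
  fixes h c d a b :: real and m0 ma mb mc na nb nc p q r u v k :: nat
  assumes tri: "triangle h c c" "triangle h a b" "triangle d c b" "triangle d a c"
    and e: "h + c + c = real m0" "h + a + b = real ma" "d + c + b = real mb" "d + a + c = real mc"
       "h + c + d + a = real na" "c + c + a + b = real nb" "c + h + b + d = real nc"
    and n: "ma + p = m0" "mb + q = m0 + k" "mc + r = m0 + k" "na = m0 + u" "nb = m0 + k" "nc = m0 + v"
  shows "sixj h c c d a b = 0 \<longleftrightarrow> (\<Sum>s\<le>k. Gt k (real m0) (real p) (real q) (real r) (real u) (real v) s) = 0"
proof -
  have t: "tri_coeff h c c * tri_coeff h a b * tri_coeff d c b * tri_coeff d a c \<noteq> 0"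
    using tri_coeff_pos by (metis mult_eq_0_iff order_less_irrefl)
  have k: "(-1::real)^m0 * fact (m0+1) / (fact k * fact p * fact q * fact r * fact u * fact v) \<noteq> 0"
    by simp
  show ?thesis unfolding sixj_eval[OF tri e n] using t k by simp
qed

lemma sixj_k:
  fixes j1 a b c d :: real and P Q R U V k :: nat
  assumes tri: "triangle (j1 - real k) c c" "triangle (j1 - real k) a b" "triangle d c b" "triangle d a c"
  and hs: "real Q = a + c - d" "real U = a + d - c" "real R = b + c - d" "real V = b + d - c"
     "real P = 2*c - j1" "j1 = a + b" "real k \<le> j1"
  shows "sixj (j1 - real k) c c d a b = 0 \<longleftrightarrow>
    (\<Sum>s\<le>k. Gt k (real (P+Q+U+R+V-k)) (real P) (real Q) (real R) (real U) (real V) s) = 0"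
proof -
  define n where "n = P+Q+U+R+V"
  have rn: "real n = 2*c + j1" unfolding n_def using hs by simp
  have kn: "k \<le> n" using rn hs by (simp add: of_nat_le_iff[symmetric]) 
  have k2: "k \<le> Q+U+R+V" using hs by (simp add: of_nat_le_iff[symmetric])
  have ra1: "real (n-k) = real n - real k" using kn by (simp add: of_nat_diff)
  have ra2: "real (Q+U+R+V-k) = real Q + real U + real R + real V - real k" using k2 by (simp add: of_nat_diff)
  have "sixj (j1 - real k) c c d a b = 0 \<longleftrightarrow>
    (\<Sum>s\<le>k. Gt k (real (n-k)) (real P) (real Q) (real R) (real U) (real V) s) = 0"
  proof (rule sixj_zero_iff[OF tri, where ma="Q+U+R+V-k" and mb="P+U+R+V" and mc="P+Q+U+V"
      and na="n-k+U" and nb="n" and nc="n-k+V"])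
    show "j1 - real k + c + c = real (n - k)" using ra1 rn by linarith
    show "j1 - real k + a + b = real (Q + U + R + V - k)" using ra2 hs by simp
    show "d + c + b = real (P + U + R + V)" using hs by simp
    show "d + a + c = real (P + Q + U + V)" using hs by simp
    show "j1 - real k + c + d + a = real (n - k + U)" using ra1 rn hs by simp
    show "c + c + a + b = real n" using rn hs by simp
    show "c + (j1 - real k) + b + d = real (n - k + V)" using ra1 rn hs by simp
    show "Q + U + R + V - k + P = n - k" using k2 kn unfolding n_def by simp
    show "P + U + R + V + Q = n - k + k" using kn unfolding n_def by simp
    show "P + Q + U + V + R = n - k + k" using kn unfolding n_def by simp
  qed (use kn in simp_all)
  then show ?thesis unfolding n_def .
qed

lemma sixj_k':
  fixes h j1 a b c d :: real and P Q R U V k :: nat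
  assumes hk: "h = j1 - real k"
  and tri: "triangle h c c" "triangle h a b" "triangle d c b" "triangle d a c"
  and hs: "real Q = a + c - d" "real U = a + d - c" "real R = b + c - d" "real V = b + d - c"
     "real P = 2*c - j1" "j1 = a + b" "real k \<le> j1"
  shows "sixj h c c d a b = 0 \<longleftrightarrow>
    (\<Sum>s\<le>k. Gt k (real (P+Q+U+R+V-k)) (real P) (real Q) (real R) (real U) (real V) s) = 0"
  using sixj_k[OF tri[unfolded hk] hs] hk by simp



lemma Q2_neg: fixes A P Q R U V D :: real
  assumes "1 \<le> U" "1 \<le> V" "1 \<le> D" "0 \<le> P" "D*(P+1) = 2*U*V" "Q = U+D" "R = V+D" "A = P+Q+U+R+V-2"
  shows "(\<Sum>s\<le>2. Gt 2 A P Q R U V s) < 0"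
proof -
  have m: "(\<Sum>s\<le>2. Gt 2 A P Q R U V s) * ((P+1)*(P+2)) = Q*(Q-1)*R*(R-1)*(P+1)*(P+2) - 2*(A+2)*Q*R*U*V*(P+2)
   + (A+2)*(A+3)*U*(U-1)*V*(V-1)" by (rule Q2_mul) (rule assms(4))
  have p: "D^2 * (Q*(Q-1)*R*(R-1)*(P+1)*(P+2) - 2*(A+2)*Q*R*U*V*(P+2)
   + (A+2)*(A+3)*U*(U-1)*V*(V-1)) = 2*U*V*D^4 - 2*U*V*D^5 + 6*U*V^2*D^3 - 8*U*V^2*D^4 + 4*U*V^3*D^2 - 10*U*V^3*D^3 - 4*U*V^4*D^2 + 6*U^2*V*D^3 - 8*U^2*V*D^4 + 18*U^2*V^2*D^2 - 30*U^2*V^2*D^3 + 12*U^2*V^3*D - 34*U^2*V^3*D^2 - 12*U^2*V^4*D + 4*U^3*V*D^2 - 10*U^3*V*D^3 + 12*U^3*V^2*D - 34*U^3*V^2*D^2 + 8*U^3*V^3 - 32*U^3*V^3*D - 8*U^3*V^4 - 4*U^4*V*D^2 - 12*U^4*V^2*D - 8*U^4*V^3"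
    unfolding assms(8) unfolding assms(6,7) using assms(5) by algebra
  have "2*U*V*D^4 - 2*U*V*D^5 + 6*U*V^2*D^3 - 8*U*V^2*D^4 + 4*U*V^3*D^2 - 10*U*V^3*D^3 - 4*U*V^4*D^2 + 6*U^2*V*D^3 - 8*U^2*V*D^4 + 18*U^2*V^2*D^2 - 30*U^2*V^2*D^3 + 12*U^2*V^3*D - 34*U^2*V^3*D^2 - 12*U^2*V^4*D + 4*U^3*V*D^2 - 10*U^3*V*D^3 + 12*U^3*V^2*D - 34*U^3*V^2*D^2 + 8*U^3*V^3 - 32*U^3*V^3*D - 8*U^3*V^4 - 4*U^4*V*D^2 - 12*U^4*V^2*D - 8*U^4*V^3 < 0" by (rule S2_neg) (use assms in auto)
  then have neg: "D^2 * ((\<Sum>s\<le>2. Gt 2 A P Q R U V s) * ((P+1)*(P+2))) < 0" unfolding m p .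
  have d2: "0 < D^2" using assms by simp
  have pp: "0 < (P+1)*(P+2)" using assms by simp
  have "(\<Sum>s\<le>2. Gt 2 A P Q R U V s) * ((P+1)*(P+2)) < 0" using neg d2 by (simp add: mult_less_0_iff)
  then show ?thesis using pp by (metis mult_less_cancel_right_pos mult_zero_left)
qed

lemma Q3_neg: fixes A P Q R U V D :: real
  assumes "1 \<le> U" "1 \<le> V" "1 \<le> D" "0 \<le> P" "D*(P+1) = 2*U*V" "Q = U+D" "R = V+D" "A = P+Q+U+R+V-3"
  shows "(\<Sum>s\<le>3. Gt 3 A P Q R U V s) < 0"
proof -
  have m: "(\<Sum>s\<le>3. Gt 3 A P Q R U V s) * ((P+1)*(P+2)*(P+3)) = Q*(Q-1)*(Q-2)*R*(R-1)*(R-2)*(P+1)*(P+2)*(P+3)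
   - 3*(A+2)*Q*(Q-1)*R*(R-1)*U*V*(P+2)*(P+3)
   + 3*(A+2)*(A+3)*Q*R*U*(U-1)*V*(V-1)*(P+3)
   - (A+2)*(A+3)*(A+4)*U*(U-1)*(U-2)*V*(V-1)*(V-2)" by (rule Q3_mul) (rule assms(4))
  have p: "D^3 * (Q*(Q-1)*(Q-2)*R*(R-1)*(R-2)*(P+1)*(P+2)*(P+3)
   - 3*(A+2)*Q*(Q-1)*R*(R-1)*U*V*(P+2)*(P+3)
   + 3*(A+2)*(A+3)*Q*R*U*(U-1)*V*(V-1)*(P+3)
   - (A+2)*(A+3)*(A+4)*U*(U-1)*(U-2)*V*(V-1)*(V-2)) = 24*U*V*D^5 - 52*U*V*D^6 + 36*U*V*D^7 - 8*U*V*D^8 + 72*U*V^2*D^4 - 208*U*V^2*D^5 + 180*U*V^2*D^6 - 48*U*V^2*D^7 + 48*U*V^3*D^3 - 260*U*V^3*D^4 + 324*U*V^3*D^5 - 112*U*V^3*D^6 - 104*U*V^4*D^3 + 252*U*V^4*D^4 - 128*U*V^4*D^5 + 72*U*V^5*D^3 - 72*U*V^5*D^4 - 16*U*V^6*D^3 + 72*U^2*V*D^4 - 208*U^2*V*D^5 + 180*U^2*V*D^6 - 48*U^2*V*D^7 + 216*U^2*V^2*D^3 - 780*U^2*V^2*D^4 + 828*U^2*V^2*D^5 - 264*U^2*V^2*D^6 + 144*U^2*V^3*D^2 - 884*U^2*V^3*D^3 + 1332*U^2*V^3*D^4 - 552*U^2*V^3*D^5 - 312*U^2*V^4*D^2 +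 900*U^2*V^4*D^3 - 552*U^2*V^4*D^4 + 216*U^2*V^5*D^2 - 264*U^2*V^5*D^3 - 48*U^2*V^6*D^2 + 48*U^3*V*D^3 - 260*U^3*V*D^4 + 324*U^3*V*D^5 - 112*U^3*V*D^6 + 144*U^3*V^2*D^2 - 884*U^3*V^2*D^3 + 1332*U^3*V^2*D^4 - 552*U^3*V^2*D^5 + 96*U^3*V^3*D - 832*U^3*V^3*D^2 + 1800*U^3*V^3*D^3 - 992*U^3*V^3*D^4 - 208*U^3*V^4*D + 936*U^3*V^4*D^2 - 808*U^3*V^4*D^3 + 144*U^3*V^5*D - 288*U^3*V^5*D^2 - 32*U^3*V^6*D - 104*U^4*V*D^3 + 252*U^4*V*D^4 - 128*U^4*V*D^5 - 312*U^4*V^2*D^2 + 900*U^4*V^2*D^3 - 552*U^4*V^2*D^4 - 208*U^4*V^3*D + 936*U^4*V^3*D^2 - 808*U^4*V^3*D^3 + 288*U^4*V^4*D - 480*U^4*V^4*D^2 - 96*U^4*V^5*D + 72*U^5*V*D^3 - 72*U^5*V*D^4 + 216*U^5*V^2*D^2 - 264*U^5*V^2*D^3 + 144*U^5*V^3*D - 288*U^5*V^3*D^2 - 96*U^5*V^4*D - 16*U^6*V*D^3 - 48*U^6*V^2*D^2 - 32*U^6*V^3*D"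
    unfolding assms(8) unfolding assms(6,7) using assms(5) by algebra
  have "24*U*V*D^5 - 52*U*V*D^6 + 36*U*V*D^7 - 8*U*V*D^8 + 72*U*V^2*D^4 - 208*U*V^2*D^5 + 180*U*V^2*D^6 - 48*U*V^2*D^7 + 48*U*V^3*D^3 - 260*U*V^3*D^4 + 324*U*V^3*D^5 - 112*U*V^3*D^6 - 104*U*V^4*D^3 + 252*U*V^4*D^4 - 128*U*V^4*D^5 + 72*U*V^5*D^3 - 72*U*V^5*D^4 - 16*U*V^6*D^3 + 72*U^2*V*D^4 - 208*U^2*V*D^5 + 180*U^2*V*D^6 - 48*U^2*V*D^7 + 216*U^2*V^2*D^3 - 780*U^2*V^2*D^4 + 828*U^2*V^2*D^5 - 264*U^2*V^2*D^6 + 144*U^2*V^3*D^2 - 884*U^2*V^3*D^3 + 1332*U^2*V^3*D^4 - 552*U^2*V^3*D^5 - 312*U^2*V^4*D^2 + 900*U^2*V^4*D^3 - 552*U^2*V^4*D^4 + 216*U^2*V^5*D^2 - 264*U^2*V^5*D^3 - 48*U^2*V^6*D^2 + 48*U^3*V*D^3 - 260*U^3*V*D^4 + 324*U^3*V*D^5 - 112*U^3*V*D^6 + 144*U^3*V^2*D^2 - 884*U^3*V^2*D^3 + 1332*U^3*V^2*D^4 - 552*U^3*V^2*D^5 + 96*U^3*V^3*D - 832*U^3*V^3*D^2 + 1800*U^3*V^3*D^3 - 992*U^3*V^3*D^4 - 208*U^3*V^4*D + 936*U^3*V^4*D^2 - 808*U^3*V^4*D^3 + 144*U^3*V^5*D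 - 288*U^3*V^5*D^2 - 32*U^3*V^6*D - 104*U^4*V*D^3 + 252*U^4*V*D^4 - 128*U^4*V*D^5 - 312*U^4*V^2*D^2 + 900*U^4*V^2*D^3 - 552*U^4*V^2*D^4 - 208*U^4*V^3*D + 936*U^4*V^3*D^2 - 808*U^4*V^3*D^3 + 288*U^4*V^4*D - 480*U^4*V^4*D^2 - 96*U^4*V^5*D + 72*U^5*V*D^3 - 72*U^5*V*D^4 + 216*U^5*V^2*D^2 - 264*U^5*V^2*D^3 + 144*U^5*V^3*D - 288*U^5*V^3*D^2 - 96*U^5*V^4*D - 16*U^6*V*D^3 - 48*U^6*V^2*D^2 - 32*U^6*V^3*D < 0" by (rule S3_neg) (use assms in auto)
  then have neg: "D^3 * ((\<Sum>s\<le>3. Gt 3 A P Q R U V s) * ((P+1)*(P+2)*(P+3))) < 0" unfolding m p .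
  have d2: "0 < D^3" using assms by simp
  have pp: "0 < (P+1)*(P+2)*(P+3)" using assms by simp
  have "(\<Sum>s\<le>3. Gt 3 A P Q R U V s) * ((P+1)*(P+2)*(P+3)) < 0" using neg d2 by (simp add: mult_less_0_iff)
  then show ?thesis using pp by (metis mult_less_cancel_right_pos mult_zero_left)
qed



lemma int_nat_ex: "x \<in> \<int> \<Longrightarrow> 0 \<le> x \<Longrightarrow> \<exists>n::nat. real n = x"
proof -
  assume "x \<in> \<int>" "0 \<le> x"
  then obtain z where "x = of_int z" by (auto elim: Ints_cases)
  with \<open>0 \<le> x\<close> have "x = real (nat z)" by simp
  then show ?thesis by (rule_tac x="nat z" in exI) simp
qed

theorem proposition2p3:
  fixes j1 j2 j3 j4 j5 j6 :: real
  assumes "halfint j1" "halfint j2" "halfint j3" "halfint j4" "halfint j5" "halfint j6"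
    and "j1 = j5 + j6" and "j1 \<ge> 3" and "j2 = j3"
    and "\<forall>h \<in> {j1, j1 - 1}. triangle h j2 j3 \<and> triangle h j5 j6
                              \<and> triangle j4 j2 j6 \<and> triangle j4 j5 j3"
    and "sixj (j1 - 1) j2 j3 j4 j5 j6 = 0"
  shows "sixj (j1 - 2) j2 j3 j4 j5 j6 \<noteq> 0 \<and> sixj (j1 - 3) j2 j3 j4 j5 j6 \<noteq> 0
    \<and> (\<forall>h \<in> {j1 - 2, j1 - 3}. triangle h j2 j3 \<and> triangle h j5 j6
                              \<and> triangle j4 j2 j6 \<and> triangle j4 j5 j3)"
proof -
  note j3 = assms(9)[symmetric]
  have t0: "triangle j1 j2 j2" "triangle j1 j5 j6" "triangle j4 j2 j6" "triangle j4 j5 j2"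
    using assms(10) j3 by auto
  have t1: "triangle (j1 - 1) j2 j2" "triangle (j1 - 1) j5 j6"
    using assms(10) j3 by auto
  have z: "2*j1 \<in> \<int>" "2*j2 \<in> \<int>" "2*j4 \<in> \<int>"
    using assms(1,2,4) unfolding halfint_def by auto
  have s1: "j4 + j5 + j2 \<in> \<int>" "j4 + j2 + j6 \<in> \<int>" "j1 + j2 + j2 \<in> \<int>"
    using t0 unfolding triangle_def by auto
  have "j5 + j2 - j4 = (j4 + j5 + j2) - 2*j4" by simp
  then have iQ: "j5 + j2 - j4 \<in> \<int>" using s1 z by (metis Ints_diff)
  have "j5 + j4 - j2 = (j4 + j5 + j2) - 2*j2" by simp
  then have iU: "j5 + j4 - j2 \<in> \<int>" using s1 z by (metis Ints_diff)
  have "j6 + j2 - j4 = (j4 + j2 + j6) - 2*j4" by simp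
  then have iR: "j6 + j2 - j4 \<in> \<int>" using s1 z by (metis Ints_diff)
  have "j6 + j4 - j2 = (j4 + j2 + j6) - 2*j2" by simp
  then have iV: "j6 + j4 - j2 \<in> \<int>" using s1 z by (metis Ints_diff)
  have "2*j2 - j1 = (j1 + j2 + j2) - 2*j1" by simp
  then have iP: "2*j2 - j1 \<in> \<int>" using s1 z by (metis Ints_diff)
  have tt: "\<bar>j4 - j5\<bar> \<le> j2" "\<bar>j4 - j2\<bar> \<le> j6" "\<bar>j1 - j2\<bar> \<le> j2" "j2 \<le> j4 + j5"
    using t0 unfolding triangle_def by auto
  have nQ: "0 \<le> j5 + j2 - j4" and nU: "0 \<le> j5 + j4 - j2" and nR: "0 \<le> j6 + j2 - j4"
    and nV: "0 \<le> j6 + j4 - j2" and nP: "0 \<le> 2*j2 - j1"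
    using tt by (simp_all add: abs_le_iff)
  obtain Q :: nat where hQ: "real Q = j5 + j2 - j4" using int_nat_ex[OF iQ nQ] by blast
  obtain U :: nat where hU: "real U = j5 + j4 - j2" using int_nat_ex[OF iU nU] by blast
  obtain R :: nat where hR: "real R = j6 + j2 - j4" using int_nat_ex[OF iR nR] by blast
  obtain V :: nat where hV: "real V = j6 + j4 - j2" using int_nat_ex[OF iV nV] by blast
  obtain P :: nat where hP: "real P = 2*j2 - j1" using int_nat_ex[OF iP nP] by blast
  define D where "D = real Q - real U"
  have QD: "real Q = real U + D" and RD: "real R = real V + D"
    unfolding D_def using hQ hU hR hV by auto
  have j5h: "1 \<le> real Q + real U" and j6h: "1 \<le> real R + real V"
    using t1 assms(7) hQ hU hR hV unfolding triangle_def by auto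
  have e1: "sixj (j1 - 1) j2 j2 j4 j5 j6 = 0 \<longleftrightarrow>
    (\<Sum>s\<le>1. Gt 1 (real (P+Q+U+R+V-1)) (real P) (real Q) (real R) (real U) (real V) s) = 0"
    by (rule sixj_k') (use t1 t0 hQ hU hR hV hP assms(7,8) in auto)
  have "(\<Sum>s\<le>1. Gt 1 (real (P+Q+U+R+V-1)) (real P) (real Q) (real R) (real U) (real V) s) = 0"
    using e1 assms(11) j3 by simp
  moreover have "(\<Sum>s\<le>1. Gt 1 (real (P+Q+U+R+V-1)) (real P) (real Q) (real R) (real U) (real V) s)
     = real Q * real R - (real (P+Q+U+R+V-1) + 2) * real U * real V / (real P + 1)"
    by (rule sum1) simp
  moreover have "real (P+Q+U+R+V-1) = real P + real Q + real U + real R + real V - 1"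
    using hQ hU hR hV hP assms(7,8) by (simp add: of_nat_diff)
  ultimately have "real Q * real R - (real P + real Q + real U + real R + real V + 1) * real U * real V / (real P + 1) = 0"
    by (simp add: algebra_simps)
  then have rel0: "real Q * real R * (real P + 1) = (real P + real Q + real U + real R + real V + 1) * real U * real V"
    by (simp add: field_simps add_nonneg_eq_0_iff)
  have "(real U + real V + D) * (D * (real P + 1) - 2 * real U * real V) = 0"
    using rel0 unfolding QD RD by (simp add: algebra_simps)
  moreover have "real U + real V + D = j1" using hU hV D_def hQ assms(7) by simp
  ultimately have rel: "D * (real P + 1) = 2 * real U * real V" using assms(8) by simp
  have U1: "1 \<le> real U"
  proof (rule ccontr)
    assume "\<not> 1 \<le> real U" then have "U = 0" by simp
    then have "D = 0" using rel by simp
    then show False using j5h QD \<open>U = 0\<close> by simp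
  qed
  have V1: "1 \<le> real V"
  proof (rule ccontr)
    assume "\<not> 1 \<le> real V" then have "V = 0" by simp
    then have "D = 0" using rel by simp
    then show False using j6h RD \<open>V = 0\<close> by simp
  qed
  have "0 < D * (real P + 1)" using rel U1 V1 by simp
  then have "0 < D" by (simp add: zero_less_mult_iff)
  then have "U < Q" unfolding D_def by simp
  then have D1: "1 \<le> D" unfolding D_def by (simp add: of_nat_less_iff[symmetric] ) 
  have tk: "triangle (j1 - real k) j2 j2 \<and> triangle (j1 - real k) j5 j6" if "k \<le> 3" for k :: nat
  proof -
    have "j1 - real k + j2 + j2 = (j1 + j2 + j2) - real k" by simp
    then have a: "j1 - real k + j2 + j2 \<in> \<int>" using s1 by (metis Ints_diff Ints_of_nat)
    have "j1 - real k + j5 + j6 = 2*j1 - real k" using assms(7) by simp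
    then have b: "j1 - real k + j5 + j6 \<in> \<int>" using z by (metis Ints_diff Ints_of_nat)
    have "real k \<le> 3" using that by simp
    then show ?thesis using a b hP hQ hU hR hV QD RD U1 V1 D1 assms(7,8)
      unfolding triangle_def by auto
  qed
  have t2: "triangle (j1 - 2) j2 j2" "triangle (j1 - 2) j5 j6" using tk[of 2] by simp_all
  have t3: "triangle (j1 - 3) j2 j2" "triangle (j1 - 3) j5 j6" using tk[of 3] by simp_all
  have e2: "sixj (j1 - 2) j2 j2 j4 j5 j6 = 0 \<longleftrightarrow>
    (\<Sum>s\<le>2. Gt 2 (real (P+Q+U+R+V-2)) (real P) (real Q) (real R) (real U) (real V) s) = 0"
    by (rule sixj_k') (use t2 t0 hQ hU hR hV hP assms(7,8) in auto)
  have "(\<Sum>s\<le>2. Gt 2 (real (P+Q+U+R+V-2)) (real P) (real Q) (real R) (real U) (real V) s) < 0"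
  proof (rule Q2_neg[OF U1 V1 D1 _ rel QD RD])
    show "real (P+Q+U+R+V-2) = real P + real Q + real U + real R + real V - 2"
      using hQ hU hR hV hP assms(7,8) by (simp add: of_nat_diff)
  qed simp
  then have n2: "sixj (j1 - 2) j2 j2 j4 j5 j6 \<noteq> 0" using e2 by simp
  have e3: "sixj (j1 - 3) j2 j2 j4 j5 j6 = 0 \<longleftrightarrow>
    (\<Sum>s\<le>3. Gt 3 (real (P+Q+U+R+V-3)) (real P) (real Q) (real R) (real U) (real V) s) = 0"
    by (rule sixj_k') (use t3 t0 hQ hU hR hV hP assms(7,8) in auto)
  have "(\<Sum>s\<le>3. Gt 3 (real (P+Q+U+R+V-3)) (real P) (real Q) (real R) (real U) (real V) s) < 0"
  proof (rule Q3_neg[OF U1 V1 D1 _ rel QD RD])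
    show "real (P+Q+U+R+V-3) = real P + real Q + real U + real R + real V - 3"
      using hQ hU hR hV hP assms(7,8) by (simp add: of_nat_diff)
  qed simp
  then have n3: "sixj (j1 - 3) j2 j2 j4 j5 j6 \<noteq> 0" using e3 by simp
  show ?thesis using n2 n3 t2 t3 t0 j3 by auto
qed


end
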